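(* Let $\Bbbk$ be a field of characteristic zero, let $V$ be a finite-dimensional $\Bbbk$-vector space, let $m\ge 2$, and for each $\ell=2,\dots,m$ let $\Psi_\ell:V^{\ell}\to V$ be a symmetric $\Bbbk$-multilinear map. Consider the polynomial map $F:V\to V$, $F(x)=x-\sum_{\ell=2}^m\Psi_\ell(x,\dots,x)$, and the algebra $A=(V,\{\Psi_\ell\}_{\ell=2}^m)$. Then the Jacobian (determinant of the Jacobian matrix) of $F$ is identically $1$ if and only if $A$ is of Engel type $s$ for some $s$.
   Context: For $x\in A$ and $2\le\ell\le m$, let $\mathrm{Ad}_{\ell-1}(x):A\to A$ be the linear map $y\mapsto\Psi_\ell(y,x,\dots,x)$. For $s\ge1$ let $E_s(x)$ be the linear operator $\sum \ell_1\ell_2\cdots\ell_q\,\mathrm{Ad}_{\ell_1-1}(x)\circ\cdots\circ\mathrm{Ad}_{\ell_q-1}(x)$, the sum over all $q\ge1$ and all sequences $(\ell_1,\dots,\ell_q)$ with $2\le\ell_i\le m$ and $\sum_i(\ell_i-1)=s$; this is the homogeneous component of degree $s$ in $x$ of the formal series $\sum_{k\ge0}\big(\sum_{\ell=2}^m \ell\,\mathrm{Ad}_{\ell-1}(x)\big)^k$ (the formal inverse of the differential $E-\sum_\ell \ell\,\mathrm{Ad}_{\ell-1}(x)$ of $F$). The algebra $A$ is said to be of Engel type $s$ if $E_{s'}(x)=0$ for all $x\in A$ and all $s'\ge s$. (In the cubic case $F(x)=x-\Psi_3(x,x,x)$ this amounts to nilpotence of the operators $y\mapsto\Psi_3(x,x,y)$.)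 *)

theory Defs
  imports "HOL-Analysis.Analysis" "HOL-Computational_Algebra.Polynomial"
begin

text \<open>An l-linear map V^l \<rightarrow> V is modelled as a function Psi l taking an argument
  family v :: nat \<Rightarrow> 'k^'n, of which only the entries v 0, ..., v (l-1) matter.\<close>

definition symmetric_multilinear :: "nat \<Rightarrow> ((nat \<Rightarrow> 'k::field ^'n) \<Rightarrow> 'k^'n) \<Rightarrow> bool" where
  "symmetric_multilinear l P \<longleftrightarrow>
     (\<forall>v w. (\<forall>i<l. v i = w i) \<longrightarrow> P v = P w) \<and>
     (\<forall>i<l. \<forall>v a b. P (v(i := a + b)) = P (v(i := a)) + P (v(i := b))) \<and>
     (\<forall>i<l. \<forall>v a c. P (v(i := c *s a)) = c *s P (v(i := a))) \<and>
     (\<forall>p v. p permutes {..<l} \<longrightarrow> P (v \<circ> p) = P v)"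

definition polyF :: "nat \<Rightarrow> (nat \<Rightarrow> (nat \<Rightarrow> 'k::field ^'n) \<Rightarrow> 'k^'n) \<Rightarrow> 'k^'n \<Rightarrow> 'k^'n" where
  "polyF m Psi x = x - (\<Sum>l\<in>{2..m}. Psi l (\<lambda>_. x))"

text \<open>Formal partial derivative: the (i,j) entry of the Jacobian matrix of a polynomial
  map G at x is the coefficient of t in the polynomial t \<mapsto> G(x + t e_j)_i.\<close>
definition jacobian_matrix :: "('k::field ^'n \<Rightarrow> 'k^'n) \<Rightarrow> 'k^'n \<Rightarrow> 'k^'n^'n" where
  "jacobian_matrix G x = (\<chi> i j. coeff (THE p. \<forall>t. poly p t = G (x + t *s axis j 1) $ i) 1)"

definition Ad :: "(nat \<Rightarrow> (nat \<Rightarrow> 'k::field ^'n) \<Rightarrow> 'k^'n) \<Rightarrow> nat \<Rightarrow> 'k^'n \<Rightarrow> 'k^'n \<Rightarrow> 'k^'n" where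
  "Ad Psi l x y = Psi l (\<lambda>i. if i = 0 then y else x)"

definition engel_seqs :: "nat \<Rightarrow> nat \<Rightarrow> nat list set" where
  "engel_seqs m s = {ls. ls \<noteq> [] \<and> set ls \<subseteq> {2..m} \<and> sum_list (map (\<lambda>l. l - 1) ls) = s}"

definition engelE :: "nat \<Rightarrow> (nat \<Rightarrow> (nat \<Rightarrow> 'k::field ^'n) \<Rightarrow> 'k^'n) \<Rightarrow> nat \<Rightarrow> 'k^'n \<Rightarrow> 'k^'n \<Rightarrow> 'k^'n" where
  "engelE m Psi s x y =
     (\<Sum>ls\<in>engel_seqs m s. of_nat (prod_list ls) *s foldr (\<lambda>l f. Ad Psi l x \<circ> f) ls id y)"

definition engel_type :: "nat \<Rightarrow> (nat \<Rightarrow> (nat \<Rightarrow> 'k::field ^'n) \<Rightarrow> 'k^'n) \<Rightarrow> nat \<Rightarrow> bool" where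
  "engel_type m Psi s \<longleftrightarrow> (\<forall>x s'. s' \<ge> s \<longrightarrow> (\<forall>y. engelE m Psi s' x y = 0))"

end

theory Submission
  imports Defs
begin


lemma sml_cong: "symmetric_multilinear l P \<Longrightarrow> (\<And>i. i<l \<Longrightarrow> v i = w i) \<Longrightarrow> P v = P w"
  unfolding symmetric_multilinear_def by blast
lemma sml_add: "symmetric_multilinear l P \<Longrightarrow> i<l \<Longrightarrow> P (v(i := a + b)) = P (v(i := a)) + P (v(i := b))"
  unfolding symmetric_multilinear_def by blast
lemma sml_scale: "symmetric_multilinear l P \<Longrightarrow> i<l \<Longrightarrow> P (v(i := c *s a)) = c *s P (v(i := a))"
  unfolding symmetric_multilinear_def by blast
lemma sml_perm: "symmetric_multilinear l P \<Longrightarrow> p permutes {..<l} \<Longrightarrow> P (v \<circ> p) = P v"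
  unfolding symmetric_multilinear_def by blast

lemma sml_scale_rest:
  assumes S: "symmetric_multilinear l P" 
  shows "Suc k \<le> l \<Longrightarrow> P (\<lambda>i. if i = 0 then y else if i \<le> k then t *s x else x) = t^k *s P (\<lambda>i. if i = 0 then y else x)"
proof (induction k)
  case 0
  have "(\<lambda>i::nat. if i = 0 then y else if i \<le> 0 then t *s x else x) = (\<lambda>i. if i = 0 then y else x)" by (auto simp: fun_eq_iff)
  then show ?case by simp
next
  case (Suc k)
  define f where "f = (\<lambda>i::nat. if i = 0 then y else if i \<le> k then t *s x else x)"
  have e1: "(\<lambda>i. if i = 0 then y else if i \<le> Suc k then t *s x else x) = f(Suc k := t *s x)"
    by (auto simp: f_def le_Suc_eq)
  have e2: "f(Suc k := x) = f" by (auto simp: f_def)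
  have "P (f(Suc k := t *s x)) = t *s P (f(Suc k := x))"
    using sml_scale[OF S, of "Suc k"] Suc.prems by simp
  also have "\<dots> = t *s P f" by (simp add: e2)
  also have "\<dots> = t *s (t^k *s P (\<lambda>i. if i = 0 then y else x))"
    using Suc by (simp add: f_def)
  finally show ?case by (simp add: e1)
qed

lemma Ad_scale:
  assumes S: "symmetric_multilinear l (Psi l)" and l: "l \<ge> 1"
  shows "Ad Psi l (t *s x) y = t^(l-1) *s Ad Psi l x y"
proof -
  have "Ad Psi l (t *s x) y = Psi l (\<lambda>i. if i = 0 then y else if i \<le> l - 1 then t *s x else x)"
    unfolding Ad_def by (rule sml_cong[OF S]) auto
  also have "\<dots> = t^(l-1) *s Ad Psi l x y"
    unfolding Ad_def using l by (intro sml_scale_rest[OF S]) auto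
  finally show ?thesis .
qed

lemma sml_poly:
  assumes S: "symmetric_multilinear l P"
  shows "k \<le> l \<Longrightarrow> \<exists>p. (\<forall>t. poly p t = P (\<lambda>i. if i < k then a i + t *s b i else a i) $ c)
     \<and> coeff p 0 = P a $ c \<and> coeff p 1 = (\<Sum>i<k. P (a(i := b i))) $ c"
proof (induction k arbitrary: a)
  case 0
  show ?case by (rule exI[of _ "[:P a $ c:]"]) (simp add: fun_eq_iff)
next
  case (Suc k)
  define w where "w = (\<lambda>a t. (\<lambda>i. if i < k then a i + t *s b i else a i))"
  have kl': "k \<le> l" using Suc.prems by simp
  obtain p1 where p1: "\<forall>t. poly p1 t = P (w a t) $ c" "coeff p1 0 = P a $ c"
    "coeff p1 1 = (\<Sum>i<k. P (a(i := b i))) $ c"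
    using Suc.IH[of a] kl' unfolding w_def by blast
  obtain p2 where p2: "\<forall>t. poly p2 t = P (w (a(k := b k)) t) $ c" "coeff p2 0 = P (a(k := b k)) $ c"
    using Suc.IH[of "a(k := b k)"] kl' unfolding w_def by blast
  have kl: "k < l" using Suc by simp
  have "\<And>t. P (\<lambda>i. if i < Suc k then a i + t *s b i else a i) = P (w a t) + t *s P (w (a(k := b k)) t)"
  proof -
    fix t
    have "(\<lambda>i. if i < Suc k then a i + t *s b i else a i) = (w a t)(k := a k + t *s b k)"
      by (auto simp: w_def fun_eq_iff)
    then have "P (\<lambda>i. if i < Suc k then a i + t *s b i else a i) = P ((w a t)(k := a k)) + P ((w a t)(k := t *s b k))"
      using sml_add[OF S kl] by simp
    also have "(w a t)(k := a k) = w a t" by (auto simp: w_def fun_eq_iff)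
    also have "P ((w a t)(k := t *s b k)) = t *s P ((w a t)(k := b k))"
      using sml_scale[OF S kl] by simp
    also have "(w a t)(k := b k) = w (a(k := b k)) t" by (auto simp: w_def fun_eq_iff)
    finally show "P (\<lambda>i. if i < Suc k then a i + t *s b i else a i) = P (w a t) + t *s P (w (a(k := b k)) t)" .
  qed
  then show ?case
    apply (intro exI[of _ "p1 + pCons 0 p2"])
    using p1 p2 by (simp add: coeff_pCons fun_upd_def)
qed

lemma sml_sym0:
  assumes S: "symmetric_multilinear l P" and r: "r < l"
  shows "P ((\<lambda>_. x)(r := e)) = P (\<lambda>i. if i = 0 then e else x)"
proof -
  have p: "Transposition.transpose 0 r permutes {..<l}" using r by (intro permutes_swap_id) auto
  have "(\<lambda>_. x)(r := e) \<circ> Transposition.transpose 0 r = (\<lambda>i. if i = 0 then e else x)"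
    by (auto simp: fun_eq_iff Transposition.transpose_def)
  then show ?thesis using sml_perm[OF S p, of "(\<lambda>_. x)(r := e)"] by simp
qed

lemma jac_formula:
  fixes Psi :: "nat \<Rightarrow> (nat \<Rightarrow> 'k::field_char_0 ^'n) \<Rightarrow> 'k^'n"
  assumes S: "\<And>l. l \<in> {2..m} \<Longrightarrow> symmetric_multilinear l (Psi l)"
  shows "jacobian_matrix (polyF m Psi) x $ i $ j
     = axis j 1 $ i - (\<Sum>l\<in>{2..m}. of_nat l * Ad Psi l x (axis j 1) $ i)"
proof -
  define e where "e = (axis j 1 :: 'k^'n)"
  have "\<forall>l\<in>{2..m}. \<exists>p. (\<forall>t. poly p t = Psi l (\<lambda>_. x + t *s e) $ i)
       \<and> coeff p 1 = of_nat l * Ad Psi l x e $ i"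
  proof
    fix l assume l: "l \<in> {2..m}"
    obtain p where p: "\<forall>t. poly p t = Psi l (\<lambda>r. if r < l then x + t *s e else x) $ i"
      "coeff p 1 = (\<Sum>r<l. Psi l ((\<lambda>_. x)(r := e))) $ i"
      using sml_poly[OF S[OF l], where k=l and a="\<lambda>_. x" and b="\<lambda>_. e" and c=i] by auto
    have "\<And>t. Psi l (\<lambda>r. if r < l then x + t *s e else x) = Psi l (\<lambda>_. x + t *s e)"
      by (rule sml_cong[OF S[OF l]]) auto
    moreover have "(\<Sum>r<l. Psi l ((\<lambda>_. x)(r := e))) $ i = of_nat l * Ad Psi l x e $ i"
    proof -
      have "(\<Sum>r<l. Psi l ((\<lambda>_. x)(r := e))) $ i = (\<Sum>r<l. Ad Psi l x e $ i)"
        unfolding sum_component Ad_def by (rule sum.cong) (simp_all add: sml_sym0[OF S[OF l]])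
      then show ?thesis by simp
    qed
    ultimately show "\<exists>p. (\<forall>t. poly p t = Psi l (\<lambda>_. x + t *s e) $ i)
       \<and> coeff p 1 = of_nat l * Ad Psi l x e $ i" using p by auto
  qed
  then obtain pp where pp: "\<And>l. l \<in> {2..m} \<Longrightarrow> (\<forall>t. poly (pp l) t = Psi l (\<lambda>_. x + t *s e) $ i)
       \<and> coeff (pp l) 1 = of_nat l * Ad Psi l x e $ i" by metis
  define q where "q = [:x $ i, e $ i:] - (\<Sum>l\<in>{2..m}. pp l)"
  have q: "\<forall>t. poly q t = polyF m Psi (x + t *s e) $ i"
    using pp by (simp add: q_def polyF_def poly_sum algebra_simps)
  have "(THE p. \<forall>t. poly p t = polyF m Psi (x + t *s e) $ i) = q"
  proof (rule the1_equality)
    show "\<exists>!p. \<forall>t. poly p t = polyF m Psi (x + t *s e) $ i"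
      using q by (metis ext poly_eq_poly_eq_iff)
  qed (rule q)
  moreover have "coeff q 1 = e $ i - (\<Sum>l\<in>{2..m}. of_nat l * Ad Psi l x e $ i)"
    using pp by (simp add: q_def coeff_sum)
  ultimately show ?thesis by (simp add: jacobian_matrix_def e_def)
qed



lemma coeff_mat_mult:
  fixes Ap Pp :: "'k::field poly^'n^'n" and B :: "nat \<Rightarrow> 'k^'n^'n"
  assumes hA: "\<And>i j k. coeff (Ap$i$j) k = (if k = 0 then (mat 1::'k^'n^'n)$i$j else - B k $i$j)"
  shows "coeff ((Ap ** Pp)$i$j) k = ((\<chi> i j. coeff (Pp$i$j) k) - (\<Sum>a\<in>{1..k}. B a ** (\<chi> i j. coeff (Pp$i$j) (k-a))))$i$j"
proof -
  have "coeff ((Ap ** Pp)$i$j) k = (\<Sum>l\<in>UNIV. \<Sum>a\<le>k. coeff (Ap$i$l) a * coeff (Pp$l$j) (k-a))"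
    by (simp add: matrix_matrix_mult_def coeff_sum coeff_mult)
  also have "\<dots> = (\<Sum>l\<in>UNIV. coeff (Ap$i$l) 0 * coeff (Pp$l$j) k
        + (\<Sum>a\<in>{1..k}. coeff (Ap$i$l) a * coeff (Pp$l$j) (k-a)))"
  proof (rule sum.cong[OF refl])
    fix l
    have e: "{..k} = insert 0 {1..k}" by auto
    show "(\<Sum>a\<le>k. coeff (Ap$i$l) a * coeff (Pp$l$j) (k-a)) = coeff (Ap$i$l) 0 * coeff (Pp$l$j) k
        + (\<Sum>a\<in>{1..k}. coeff (Ap$i$l) a * coeff (Pp$l$j) (k-a))"
      unfolding e by (subst sum.insert) auto
  qed
  also have "\<dots> = (\<Sum>l\<in>UNIV. (mat 1::'k^'n^'n)$i$l * coeff (Pp$l$j) k)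
        - (\<Sum>l\<in>UNIV. \<Sum>a\<in>{1..k}. B a $i$l * coeff (Pp$l$j) (k-a))"
    by (simp add: hA sum.distrib sum_subtractf sum_negf)
  also have "(\<Sum>l\<in>UNIV. (mat 1::'k^'n^'n)$i$l * coeff (Pp$l$j) k) = coeff (Pp$i$j) k"
    by (simp add: mat_def if_distrib[where f="\<lambda>x. x * _"] cong: if_cong)
  also have "(\<Sum>l\<in>UNIV. \<Sum>a\<in>{1..k}. B a $i$l * coeff (Pp$l$j) (k-a))
      = (\<Sum>a\<in>{1..k}. B a ** (\<chi> i j. coeff (Pp$i$j) (k-a)))$i$j" (is "?L = ?R")
  proof -
    have "?L = (\<Sum>a\<in>{1..k}. \<Sum>l\<in>UNIV. B a $i$l * coeff (Pp$l$j) (k-a))"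
      by (rule sum.swap)
    also have "\<dots> = ?R" by (simp add: matrix_matrix_mult_def)
    finally show ?thesis .
  qed
  finally show ?thesis by simp
qed

lemma rec_unique:
  fixes B Q Q' :: "nat \<Rightarrow> 'k::field^'n^'n"
  assumes "Q 0 = mat 1" "\<And>s. s \<ge> 1 \<Longrightarrow> Q s = (\<Sum>a\<in>{1..s}. B a ** Q (s-a))"
    and "Q' 0 = mat 1" "\<And>s. s \<ge> 1 \<Longrightarrow> Q' s = (\<Sum>a\<in>{1..s}. B a ** Q' (s-a))"
  shows "Q s = Q' s"
proof (induction s rule: less_induct)
  case (less s)
  show ?case
  proof (cases "s = 0")
    case True then show ?thesis using assms by simp
  next
    case False
    then have "Q s = (\<Sum>a\<in>{1..s}. B a ** Q (s-a))" "Q' s = (\<Sum>a\<in>{1..s}. B a ** Q' (s-a))"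
      using assms by auto
    moreover have "(\<Sum>a\<in>{1..s}. B a ** Q (s-a)) = (\<Sum>a\<in>{1..s}. B a ** Q' (s-a))"
      by (rule sum.cong) (use less in auto)
    ultimately show ?thesis by simp
  qed
qed

lemma poly_det:
  fixes M :: "'k::field poly^'n^'n"
  shows "poly (det M) t = det (\<chi> i j. poly (M$i$j) t)"
  unfolding det_def by (simp add: poly_sum poly_prod)

lemma degree_det:
  fixes M :: "'k::field poly^'n^'n"
  assumes "\<And>i j. degree (M$i$j) \<le> d"
  shows "degree (det M) \<le> CARD('n) * d"
  unfolding det_def
proof (rule degree_sum_le)
  fix p
  have "degree (\<Prod>i\<in>UNIV. M $ i $ p i) \<le> sum (degree \<circ> (\<lambda>i. M $ i $ p i)) UNIV"
    by (rule degree_prod_sum_le) simp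
  also have "\<dots> \<le> sum (\<lambda>_. d) (UNIV::'n set)"
    by (rule sum_mono) (simp add: assms)
  also have "\<dots> = CARD('n) * d" by simp
  finally have "degree (\<Prod>i\<in>UNIV. M $ i $ p i) \<le> CARD('n) * d" .
  then show "degree (of_int (sign p) * (\<Prod>i\<in>UNIV. M $ i $ p i)) \<le> CARD('n) * d"
    using degree_mult_le[of "of_int (sign p)" "\<Prod>i\<in>UNIV. M $ i $ p i"] by simp
qed simp

lemma mat1_poly_coeff:
  "coeff ((mat 1 :: 'k::field poly^'n^'n)$i$j) k = (if k = 0 then (mat 1::'k^'n^'n)$i$j else 0)"
  by (simp add: mat_def)

lemma L1:
  fixes Ap :: "'k::field poly^'n^'n" and B Q :: "nat \<Rightarrow> 'k^'n^'n"
  assumes hA: "\<And>i j k. coeff (Ap$i$j) k = (if k = 0 then (mat 1::'k^'n^'n)$i$j else - B k $i$j)"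
    and hQ0: "Q 0 = mat 1" and hQ: "\<And>s. s \<ge> 1 \<Longrightarrow> Q s = (\<Sum>a\<in>{1..s}. B a ** Q (s-a))"
    and hZ: "\<And>s. s \<ge> S \<Longrightarrow> Q s = 0"
  shows "det Ap = 1"
proof -
  define Pp where "Pp = (\<chi> i j. \<Sum>k<S. monom (Q k $i$j) k)"
  have cP: "coeff (Pp$i$j) k = Q k $i$j" for i j k
    using hZ[of k] by (auto simp: Pp_def coeff_sum)
  have cPm: "(\<chi> i j. coeff (Pp$i$j) k) = Q k" for k
    by (simp add: cP vec_eq_iff)
  have inv: "Ap ** Pp = mat 1"
  proof (simp add: vec_eq_iff, intro allI poly_eqI)
    fix i j k
    show "coeff ((Ap ** Pp)$i$j) k = coeff ((mat 1 :: 'k poly^'n^'n)$i$j) k"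
      unfolding coeff_mat_mult[OF hA] cPm mat1_poly_coeff
      using hQ[of k] hQ0 by auto
  qed
  have "det Ap * det Pp = 1" using det_mul[of Ap Pp] inv by simp
  then have "det Ap dvd 1" by (metis dvdI)
  then obtain c where c: "det Ap = [:c:]" using is_unit_poly_iff by blast
  have "poly (det Ap) 0 = det (\<chi> i j. poly (Ap$i$j) 0)" by (rule poly_det)
  also have "(\<chi> i j. poly (Ap$i$j) 0) = (mat 1 :: 'k^'n^'n)"
    by (simp add: vec_eq_iff poly_0_coeff_0 hA)
  finally have "poly (det Ap) 0 = 1" by simp
  with c show ?thesis by simp
qed

lemma L2:
  fixes Ap :: "'k::field_char_0 poly^'n^'n" and B Q :: "nat \<Rightarrow> 'k^'n^'n"
  assumes hA: "\<And>i j k. coeff (Ap$i$j) k = (if k = 0 then (mat 1::'k^'n^'n)$i$j else - B k $i$j)"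
    and hQ0: "Q 0 = mat 1" and hQ: "\<And>s. s \<ge> 1 \<Longrightarrow> Q s = (\<Sum>a\<in>{1..s}. B a ** Q (s-a))"
    and deg: "\<And>i j. degree (Ap$i$j) \<le> d"
    and hdet: "\<And>t. det (\<chi> i j. poly (Ap$i$j) t) = 1"
    and s: "s > CARD('n) * d"
  shows "Q s = 0"
proof -
  define Qp :: "'k poly^'n^'n" where
    "Qp = (\<chi> k c. det (\<chi> i j. if j = k then [:axis c 1 $ i:] else Ap$i$j))"
  have inv: "Ap ** Qp = mat 1"
  proof (simp add: vec_eq_iff, intro allI)
    fix i c
    show "(Ap ** Qp)$i$c = (mat 1 :: 'k poly^'n^'n)$i$c"
    proof (rule poly_eq_poly_eq_iff[THEN iffD1], rule ext)
      fix t
      define A where "A = (\<chi> i j. poly (Ap$i$j) t)"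
      define x where "x = (\<chi> k. det(\<chi> i j. if j=k then (axis c 1 :: 'k^'n)$i else A$i$j) / det A)"
      have Ax: "A *v x = axis c 1"
        using cramer[of A x "axis c 1"] hdet by (simp add: A_def x_def)
      have px: "poly (Qp$k$c) t = x $ k" for k
        using hdet unfolding Qp_def x_def A_def
        by (simp add: poly_det if_distrib[where f="\<lambda>p. poly p t"] cong: if_cong)
      have "poly ((Ap ** Qp)$i$c) t = (A *v x) $ i"
        by (simp add: matrix_matrix_mult_def matrix_vector_mult_def poly_sum px A_def)
      also have "\<dots> = poly ((mat 1 :: 'k poly^'n^'n)$i$c) t"
        by (simp add: Ax axis_def mat_def)
      finally show "poly ((Ap ** Qp)$i$c) t = poly ((mat 1 :: 'k poly^'n^'n)$i$c) t" .
    qed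
  qed
  define Pk where "Pk = (\<lambda>k. (\<chi> i j. coeff (Qp$i$j) k) :: 'k^'n^'n)"
  have rec: "coeff ((mat 1 :: 'k poly^'n^'n)$i$j) k = (Pk k - (\<Sum>a\<in>{1..k}. B a ** Pk (k-a)))$i$j" for i j k
    using coeff_mat_mult[OF hA, of Qp i j k] by (simp add: inv Pk_def)
  have P0: "Pk 0 = mat 1"
    using rec[of _ _ 0] by (simp add: vec_eq_iff mat1_poly_coeff)
  have Ps: "Pk s = (\<Sum>a\<in>{1..s}. B a ** Pk (s-a))" if "s \<ge> 1" for s
    using rec[of _ _ s] that by (simp add: vec_eq_iff mat1_poly_coeff)
  have QP: "Q s = Pk s" by (rule rec_unique[OF hQ0 hQ P0 Ps]) auto
  have "degree (Qp$i$j) \<le> CARD('n) * d" for i j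
    unfolding Qp_def by (simp, rule degree_det) (simp add: deg)
  then have "coeff (Qp$i$j) s = 0" for i j
    using s by (meson coeff_eq_0 le_less_trans)
  then show ?thesis by (simp add: QP Pk_def vec_eq_iff)
qed



definition seqs0 :: "nat \<Rightarrow> nat \<Rightarrow> nat list set" where
  "seqs0 m s = {ls. set ls \<subseteq> {2..m} \<and> sum_list (map (\<lambda>l. l - 1) ls) = s}"

definition smat :: "'k::field \<Rightarrow> 'k^'n^'m \<Rightarrow> 'k^'n^'m" where
  "smat c M = (\<chi> i j. c * M$i$j)"

lemma sum_len: "set ls \<subseteq> {2..m} \<Longrightarrow> length ls \<le> sum_list (map (\<lambda>l. l - 1) ls)"
  by (induction ls) auto

lemma finite_seqs0: "finite (seqs0 m s)"
proof (rule finite_subset)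
  show "seqs0 m s \<subseteq> {xs. set xs \<subseteq> {2..m} \<and> length xs \<le> s}"
    using sum_len unfolding seqs0_def by fastforce
qed (rule finite_lists_length_le, simp)

lemma seqs0_0: "seqs0 m 0 = {[]}"
proof -
  have "ls = []" if "set ls \<subseteq> {2..m}" "sum_list (map (\<lambda>l. l - 1) ls) = 0" for ls
    using sum_len[OF that(1)] unfolding that(2) by simp
  then show ?thesis unfolding seqs0_def by auto
qed

lemma seqs0_Suc:
  assumes "s \<ge> 1"
  shows "seqs0 m s = (\<Union>a\<in>{a\<in>{1..s}. a+1 \<le> m}. (\<lambda>r. (a+1) # r) ` seqs0 m (s-a))"
proof (intro equalityI subsetI)
  fix ls assume "ls \<in> seqs0 m s"
  then have ls: "set ls \<subseteq> {2..m}" "sum_list (map (\<lambda>l. l - 1) ls) = s" by (auto simp: seqs0_def)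
  then obtain l r where lr: "ls = l # r" using assms by (cases ls) auto
  have "l - 1 \<in> {a\<in>{1..s}. a+1 \<le> m}" using ls lr by auto
  moreover have "ls = ((l-1)+1) # r" using ls lr by auto
  moreover have "r \<in> seqs0 m (s - (l-1))" using ls lr by (auto simp: seqs0_def)
  ultimately show "ls \<in> (\<Union>a\<in>{a\<in>{1..s}. a+1 \<le> m}. (\<lambda>r. (a+1) # r) ` seqs0 m (s-a))" by blast
next
  fix ls assume "ls \<in> (\<Union>a\<in>{a\<in>{1..s}. a+1 \<le> m}. (\<lambda>r. (a+1) # r) ` seqs0 m (s-a))"
  then show "ls \<in> seqs0 m s" by (auto simp: seqs0_def subset_iff)
qed

lemma engel_seqs_eq: "s \<ge> 1 \<Longrightarrow> engel_seqs m s = seqs0 m s"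
  unfolding engel_seqs_def seqs0_def by auto

lemma vs_vec: "vector_space ((*s) :: 'k::field \<Rightarrow> 'k^'n \<Rightarrow> 'k^'n)"
  using Vector_Spaces.linear_iff matrix_vector_mul_linear_gen[where A="mat 1 :: 'k^'n^'n"] by blast

lemma Ad_linear:
  assumes S: "symmetric_multilinear l (Psi l)" and l: "l \<ge> 1"
  shows "Vector_Spaces.linear (*s) (*s) (Ad Psi l x)"
proof -
  have e: "Ad Psi l x y = Psi l ((\<lambda>_. x)(0 := y))" for y
    unfolding Ad_def by (rule arg_cong[where f="Psi l"]) (auto simp: fun_eq_iff)
  show ?thesis unfolding Vector_Spaces.linear_iff
    using vs_vec sml_add[OF S, of 0] sml_scale[OF S, of 0] l by (simp add: e)
qed

lemma Ad_matrix:
  fixes Psi :: "nat \<Rightarrow> (nat \<Rightarrow> 'k::field ^'n) \<Rightarrow> 'k^'n"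
  assumes S: "symmetric_multilinear l (Psi l)" and l: "l \<ge> 1"
  shows "Ad Psi l x y = matrix (Ad Psi l x) *v y"
  using matrix_works[OF Ad_linear[where Psi=Psi, OF S l]] by simp

lemma foldr_matrix:
  fixes Psi :: "nat \<Rightarrow> (nat \<Rightarrow> 'k::field ^'n) \<Rightarrow> 'k^'n"
  assumes S: "\<And>l. l \<in> {2..m} \<Longrightarrow> symmetric_multilinear l (Psi l)"
  shows "set ls \<subseteq> {2..m} \<Longrightarrow> foldr (\<lambda>l f. Ad Psi l x \<circ> f) ls id y
     = foldr (\<lambda>l M. matrix (Ad Psi l x) ** M) ls (mat 1) *v y"
proof (induction ls)
  case Nil then show ?case by simp
next
  case (Cons l ls)
  then have l: "l \<in> {2..m}" by auto
  then show ?case using Cons Ad_matrix[where Psi=Psi, OF S[OF l]]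
    by (simp add: matrix_vector_mul_assoc[symmetric])
qed

lemma sum_mvec: "finite A \<Longrightarrow> (\<Sum>a\<in>A. M a) *v y = (\<Sum>a\<in>A. M a *v y)"
  by (induction A rule: finite_induct) (simp_all add: matrix_vector_mult_add_rdistrib)

lemma smat_mvec: "smat c M *v y = c *s (M *v y)"
  by (simp add: smat_def vec_eq_iff matrix_vector_mult_def vector_scalar_mult_def sum_distrib_left mult.assoc)

lemma mmul_sum_right: "finite A \<Longrightarrow> X ** (\<Sum>a\<in>A. M a) = (\<Sum>a\<in>A. X ** M a)"
  by (induction A rule: finite_induct) (simp_all add: matrix_add_ldistrib)

lemma smat_mmul: "smat (c * d) (X ** Y) = smat c X ** smat d Y"
  by (simp add: smat_def vec_eq_iff matrix_matrix_mult_def sum_distrib_left mult_ac)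

lemma smat_sum: "finite A \<Longrightarrow> smat c (\<Sum>a\<in>A. M a) = (\<Sum>a\<in>A. smat c (M a))"
  by (induction A rule: finite_induct) (simp_all add: smat_def vec_eq_iff algebra_simps)



definition Gm :: "nat \<Rightarrow> (nat \<Rightarrow> (nat \<Rightarrow> 'k::field ^'n) \<Rightarrow> 'k^'n) \<Rightarrow> 'k^'n \<Rightarrow> nat \<Rightarrow> 'k^'n^'n" where
  "Gm m Psi x s = (\<Sum>ls\<in>seqs0 m s. smat (of_nat (prod_list ls)) (foldr (\<lambda>l M. matrix (Ad Psi l x) ** M) ls (mat 1)))"

definition Bm :: "nat \<Rightarrow> (nat \<Rightarrow> (nat \<Rightarrow> 'k::field ^'n) \<Rightarrow> 'k^'n) \<Rightarrow> 'k^'n \<Rightarrow> nat \<Rightarrow> 'k^'n^'n" where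
  "Bm m Psi x a = (if 1 \<le> a \<and> a+1 \<le> m then smat (of_nat (a+1)) (matrix (Ad Psi (a+1) x)) else 0)"

definition Apol :: "nat \<Rightarrow> (nat \<Rightarrow> (nat \<Rightarrow> 'k::field ^'n) \<Rightarrow> 'k^'n) \<Rightarrow> 'k^'n \<Rightarrow> 'k poly^'n^'n" where
  "Apol m Psi x = (\<chi> i j. [:(mat 1::'k^'n^'n)$i$j:] - (\<Sum>a\<in>{1..m-1}. monom (Bm m Psi x a $i$j) a))"

lemma Gm0: "Gm m Psi x 0 = mat 1"
  by (simp add: Gm_def seqs0_0 smat_def mat_def vec_eq_iff)

lemma Gm_rec:
  assumes s: "s \<ge> 1"
  shows "Gm m Psi x s = (\<Sum>a\<in>{1..s}. Bm m Psi x a ** Gm m Psi x (s-a))"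
proof -
  define A where "A = {a\<in>{1..s}. a+1 \<le> m}"
  define F where "F = (\<lambda>ls. smat (of_nat (prod_list ls)) (foldr (\<lambda>l M. matrix (Ad Psi l x) ** M) ls (mat 1)))"
  have "Gm m Psi x s = sum F (\<Union>a\<in>A. (\<lambda>r. (a+1) # r) ` seqs0 m (s-a))"
    unfolding Gm_def F_def A_def seqs0_Suc[OF s] ..
  also have "\<dots> = (\<Sum>a\<in>A. sum F ((\<lambda>r. (a+1) # r) ` seqs0 m (s-a)))"
    by (rule sum.UNION_disjoint) (auto simp: A_def finite_seqs0)
  also have "\<dots> = (\<Sum>a\<in>A. \<Sum>r\<in>seqs0 m (s-a). F ((a+1) # r))"
    by (rule sum.cong[OF refl], subst sum.reindex) (auto simp: inj_on_def)
  also have "\<dots> = (\<Sum>a\<in>A. Bm m Psi x a ** Gm m Psi x (s-a))"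
  proof (rule sum.cong[OF refl])
    fix a assume a: "a \<in> A"
    have "(\<Sum>r\<in>seqs0 m (s-a). F ((a+1) # r)) = (\<Sum>r\<in>seqs0 m (s-a). Bm m Psi x a ** F r)"
      using a by (intro sum.cong) (simp_all add: F_def A_def Bm_def smat_mmul[symmetric] distrib_right)
    also have "\<dots> = Bm m Psi x a ** Gm m Psi x (s-a)"
      by (simp add: mmul_sum_right finite_seqs0 Gm_def F_def)
    finally show "(\<Sum>r\<in>seqs0 m (s-a). F ((a+1) # r)) = Bm m Psi x a ** Gm m Psi x (s-a)" .
  qed
  also have "\<dots> = (\<Sum>a\<in>{1..s}. Bm m Psi x a ** Gm m Psi x (s-a))"
    by (rule sum.mono_neutral_left) (auto simp: A_def Bm_def)
  finally show ?thesis .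
qed

lemma engelE_Gm:
  fixes Psi :: "nat \<Rightarrow> (nat \<Rightarrow> 'k::field ^'n) \<Rightarrow> 'k^'n"
  assumes S: "\<And>l. l \<in> {2..m} \<Longrightarrow> symmetric_multilinear l (Psi l)" and s: "s \<ge> 1"
  shows "engelE m Psi s x y = Gm m Psi x s *v y"
proof -
  have "engelE m Psi s x y = (\<Sum>ls\<in>seqs0 m s. of_nat (prod_list ls) *s
      (foldr (\<lambda>l M. matrix (Ad Psi l x) ** M) ls (mat 1) *v y))"
    unfolding engelE_def engel_seqs_eq[OF s]
  proof (rule sum.cong[OF refl])
    fix ls assume "ls \<in> seqs0 m s"
    then have "set ls \<subseteq> {2..m}" by (simp add: seqs0_def)
    from foldr_matrix[OF S this, of x y]
    show "of_nat (prod_list ls) *s foldr (\<lambda>l f. Ad Psi l x \<circ> f) ls id y =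
      of_nat (prod_list ls) *s (foldr (\<lambda>l M. matrix (Ad Psi l x) ** M) ls (mat 1) *v y)" by simp
  qed
  also have "\<dots> = Gm m Psi x s *v y"
    by (simp add: Gm_def sum_mvec finite_seqs0 smat_mvec)
  finally show ?thesis .
qed

lemma Apol_coeff:
  "coeff (Apol m Psi x $i$j) k = (if k = 0 then (mat 1::'k::field^'n^'n)$i$j else - Bm m Psi x k $i$j)"
  by (auto simp: Apol_def coeff_sum Bm_def coeff_pCons split: nat.split)

lemma Apol_degree: "degree (Apol m Psi x $i$j) \<le> m - 1"
  unfolding Apol_def
  by (simp, intro degree_diff_le degree_sum_le) (auto intro: order.trans[OF degree_monom_le])

lemma jac_Apol:
  fixes Psi :: "nat \<Rightarrow> (nat \<Rightarrow> 'k::field_char_0 ^'n) \<Rightarrow> 'k^'n"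
  assumes m: "m \<ge> 2" and S: "\<And>l. l \<in> {2..m} \<Longrightarrow> symmetric_multilinear l (Psi l)"
  shows "jacobian_matrix (polyF m Psi) (t *s x) = (\<chi> i j. poly (Apol m Psi x $i$j) t)"
proof (simp add: vec_eq_iff, intro allI)
  fix i j
  have e: "{2..m} = {Suc 1..Suc (m-1)}" using m by auto
  have "(\<Sum>l\<in>{2..m}. of_nat l * Ad Psi l (t *s x) (axis j 1) $ i)
     = (\<Sum>a\<in>{1..m-1}. of_nat (Suc a) * Ad Psi (Suc a) (t *s x) (axis j 1) $ i)"
    unfolding e sum.shift_bounds_cl_Suc_ivl ..
  also have "\<dots> = (\<Sum>a\<in>{1..m-1}. Bm m Psi x a $i$j * t^a)"
  proof (rule sum.cong[OF refl])
    fix a assume a: "a \<in> {1..m-1}"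
    then have "Suc a \<in> {2..m}" and sa: "Suc a \<le> m" by auto
    from Ad_scale[where Psi=Psi, OF S[OF this(1)]] a sa
    show "of_nat (Suc a) * Ad Psi (Suc a) (t *s x) (axis j 1) $ i = Bm m Psi x a $i$j * t^a"
      by (simp add: Bm_def smat_def matrix_def mult_ac)
  qed
  finally show "jacobian_matrix (polyF m Psi) (t *s x) $ i $ j = poly (Apol m Psi x $i$j) t"
    using jac_formula[OF S, where x="t *s x" and i=i and j=j]
    by (simp add: Apol_def poly_sum poly_monom mat_def axis_def)
qed

theorem mainTheorem2:
  fixes m :: nat and Psi :: "nat \<Rightarrow> (nat \<Rightarrow> 'k::field_char_0 ^'n) \<Rightarrow> 'k^'n"
  assumes "m \<ge> 2"
    and "\<And>l. l \<in> {2..m} \<Longrightarrow> symmetric_multilinear l (Psi l)"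
  shows "(\<forall>x. det (jacobian_matrix (polyF m Psi) x) = 1) \<longleftrightarrow> (\<exists>s\<ge>1. engel_type m Psi s)"
proof
  assume H: "\<forall>x. det (jacobian_matrix (polyF m Psi) x) = 1"
  have "engel_type m Psi (CARD('n) * (m - 1) + 1)"
    unfolding engel_type_def
  proof (intro allI impI)
    fix x s' y assume s': "CARD('n) * (m - 1) + 1 \<le> s'"
    have "Gm m Psi x s' = 0"
    proof (rule L2[OF Apol_coeff Gm0 Gm_rec Apol_degree])
      show "det (\<chi> i j. poly (Apol m Psi x $i$j) t) = 1" for t
        using H jac_Apol[where m=m and Psi=Psi and t=t and x=x, OF assms] by metis
    qed (use s' in auto)
    then show "engelE m Psi s' x y = 0" using engelE_Gm[where m=m and Psi=Psi and s=s' and x=x and y=y, OF assms(2)] s' by simp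
  qed
  then show "\<exists>s\<ge>1. engel_type m Psi s" by auto
next
  assume "\<exists>s\<ge>1. engel_type m Psi s"
  then obtain s where s: "s \<ge> 1" "engel_type m Psi s" by auto
  show "\<forall>x. det (jacobian_matrix (polyF m Psi) x) = 1"
  proof
    fix x
    have Z: "Gm m Psi x s' = 0" if "s' \<ge> s" for s'
    proof -
      have "Gm m Psi x s' *v y = 0" for y
        using s that engelE_Gm[where m=m and Psi=Psi and s=s' and x=x and y=y, OF assms(2)] unfolding engel_type_def by auto
      then have "Gm m Psi x s' *v axis j 1 = 0" for j by blast
      moreover have "(G *v axis j 1) $ i = G $ i $ j" for G :: "'k^'n^'n" and i j
        by (simp add: matrix_vector_mult_def axis_def if_distrib[where f="\<lambda>z. _ * z"] cong: if_cong)
      ultimately show ?thesis unfolding vec_eq_iff by (metis zero_index)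
    qed
    have "det (Apol m Psi x) = 1"
      by (rule L1[OF Apol_coeff Gm0 Gm_rec Z]) auto
    then have "poly (det (Apol m Psi x)) 1 = 1" by simp
    moreover have "jacobian_matrix (polyF m Psi) (1 *s x) = (\<chi> i j. poly (Apol m Psi x $i$j) 1)"
      by (rule jac_Apol[where m=m and Psi=Psi, OF assms])
    ultimately show "det (jacobian_matrix (polyF m Psi) x) = 1" by (simp add: poly_det)
  qed
qed


end
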